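(* For $n\ge3$, the priority lattice $\Pi(n)$ is not distributive.
   Context: $[n]_0=\{0,\dots,n\}$. A priority forest on $[n]_0$ is a rooted forest with vertex set $[n]_0$ whose component trees $T_0,T_1,\dots$ are increasing (each non-root vertex has a larger label than its parent) and satisfy: for $j<k$ every label of $T_j$ is smaller than every label of $T_k$. The priority lattice $\Pi(n)$ is the set of priority forests on $[n]_0$, ordered by $P\le P'$ iff $E(P)\subseteq E(P')$, together with an extra element $\hat1$ greater than all priority forests; it is a lattice. *)

theory Defs
  imports Main
begin

text \<open>A rooted forest on the vertex set {0..n} is encoded by its edge set
  E, a set of pairs (parent, child). Roots are the vertices without a parent.\<close>

definition is_increasing_forest :: "nat \<Rightarrow> (nat \<times> nat) set \<Rightarrow> bool" where
  "is_increasing_forest n E \<longleftrightarrow>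
     E \<subseteq> {0..n} \<times> {0..n}
   \<and> (\<forall>(p, c) \<in> E. p < c)
   \<and> (\<forall>c p p'. (p, c) \<in> E \<longrightarrow> (p', c) \<in> E \<longrightarrow> p = p')"

definition component :: "(nat \<times> nat) set \<Rightarrow> nat \<Rightarrow> nat set" where
  "component E x = {y. (x, y) \<in> (E \<union> E\<inverse>)\<^sup>*}"

definition is_priority_forest :: "nat \<Rightarrow> (nat \<times> nat) set \<Rightarrow> bool" where
  "is_priority_forest n E \<longleftrightarrow>
     is_increasing_forest n E
   \<and> (\<forall>x\<in>{0..n}. \<forall>y\<in>{0..n}. component E x \<noteq> component E y \<longrightarrow>
        (\<forall>a\<in>component E x. \<forall>b\<in>component E y. a < b)
      \<or> (\<forall>a\<in>component E x. \<forall>b\<in>component E y. b < a))"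

text \<open>Elements of the priority lattice: Some E for a priority forest with
  edge set E, and None for the extra top element.\<close>
definition priority_lattice :: "nat \<Rightarrow> (nat \<times> nat) set option set" where
  "priority_lattice n = Some ` {E. is_priority_forest n E} \<union> {None}"

fun pl_le :: "(nat \<times> nat) set option \<Rightarrow> (nat \<times> nat) set option \<Rightarrow> bool" where
  "pl_le _ None = True"
| "pl_le None (Some _) = False"
| "pl_le (Some E) (Some E') = (E \<subseteq> E')"

definition is_join :: "'a set \<Rightarrow> ('a \<Rightarrow> 'a \<Rightarrow> bool) \<Rightarrow> 'a \<Rightarrow> 'a \<Rightarrow> 'a \<Rightarrow> bool" where
  "is_join A le x y j \<longleftrightarrow> j \<in> A \<and> le x j \<and> le y j
     \<and> (\<forall>u\<in>A. le x u \<longrightarrow> le y u \<longrightarrow> le j u)"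

definition is_meet :: "'a set \<Rightarrow> ('a \<Rightarrow> 'a \<Rightarrow> bool) \<Rightarrow> 'a \<Rightarrow> 'a \<Rightarrow> 'a \<Rightarrow> bool" where
  "is_meet A le x y m \<longleftrightarrow> m \<in> A \<and> le m x \<and> le m y
     \<and> (\<forall>u\<in>A. le u x \<longrightarrow> le u y \<longrightarrow> le u m)"

definition distributive_lattice_on :: "'a set \<Rightarrow> ('a \<Rightarrow> 'a \<Rightarrow> bool) \<Rightarrow> bool" where
  "distributive_lattice_on A le \<longleftrightarrow>
     (\<forall>x\<in>A. \<forall>y\<in>A. \<forall>z\<in>A. \<forall>j m a b s.
        is_join A le y z j \<longrightarrow> is_meet A le x j m \<longrightarrow>
        is_meet A le x y a \<longrightarrow> is_meet A le x z b \<longrightarrow> is_join A le a b s \<longrightarrow>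
        m = s)"

end

theory Submission imports Defs begin

lemma compX: "component {(2,3)} x = (if x \<in> {2,3} then {2,3} else {x})"
  proof -
  have "{(2::nat,3::nat)} \<union> {(2::nat,3::nat)}\<inverse> = {(2::nat,3::nat),(3,2)}" by auto
  then show ?thesis unfolding component_def by (simp add: rtrancl_insert, auto)
qed
lemma compY: "component {(1,2)} x = (if x \<in> {1,2} then {1,2} else {x})"
  proof -
  have "{(1::nat,2::nat)} \<union> {(1::nat,2::nat)}\<inverse> = {(1::nat,2::nat),(2,1)}" by auto
  then show ?thesis unfolding component_def by (simp add: rtrancl_insert, auto)
qed
lemma compZ: "component {(0,1),(0,2)} x = (if x \<in> {0,1,2} then {0,1,2} else {x})"
  proof -
  have "{(0::nat,1::nat),(0,2)} \<union> {(0::nat,1::nat),(0,2)}\<inverse> = {(0::nat,1::nat),(0,2),(1,0),(2,0)}" by auto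
  then show ?thesis unfolding component_def by (simp add: rtrancl_insert, auto)
qed
lemma compE: "component {} x = {x}"
  unfolding component_def by auto

lemma pX: "n \<ge> 3 \<Longrightarrow> is_priority_forest n {(2,3)}"
  unfolding is_priority_forest_def is_increasing_forest_def compX by auto
lemma pY: "n \<ge> 3 \<Longrightarrow> is_priority_forest n {(1,2)}"
  unfolding is_priority_forest_def is_increasing_forest_def compY by auto
lemma pZ: "n \<ge> 3 \<Longrightarrow> is_priority_forest n {(0,1),(0,2)}"
  unfolding is_priority_forest_def is_increasing_forest_def compZ by auto
lemma pE: "is_priority_forest n {}"
  unfolding is_priority_forest_def is_increasing_forest_def compE by auto

lemma le_cases: "pl_le u (Some E) \<longleftrightarrow> (\<exists>F. u = Some F \<and> F \<subseteq> E)"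
  by (cases u) auto

theorem lemma5p5:
  fixes n :: nat
  assumes "n \<ge> 3"
  shows "\<not> distributive_lattice_on (priority_lattice n) pl_le"
proof
  assume D: "distributive_lattice_on (priority_lattice n) pl_le"
  let ?A = "priority_lattice n"
  have inA: "Some E \<in> ?A" if "is_priority_forest n E" for E
    using that unfolding priority_lattice_def by auto
  have x: "Some {(2,3)} \<in> ?A" using inA[OF pX[OF assms]] .
  have y: "Some {(1,2)} \<in> ?A" using inA[OF pY[OF assms]] .
  have z: "Some {(0,1),(0,2)} \<in> ?A" using inA[OF pZ[OF assms]] .
  have e: "Some {} \<in> ?A" using inA[OF pE] .
  have nA: "None \<in> ?A" unfolding priority_lattice_def by auto
  have nj: "pl_le None u" if "u \<in> ?A" "pl_le (Some {(1,2)}) u" "pl_le (Some {(0,1),(0,2)}) u" for u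
  proof (cases u)
    case (Some F)
    with that(1) have "is_priority_forest n F" unfolding priority_lattice_def by auto
    moreover have "(1,2) \<in> F" "(0,2) \<in> F" using Some that(2,3) by auto
    ultimately show ?thesis unfolding is_priority_forest_def is_increasing_forest_def by fastforce
  qed simp
  have j: "is_join ?A pl_le (Some {(1,2)}) (Some {(0,1),(0,2)}) None"
    unfolding is_join_def using nA nj by auto
  have m: "is_meet ?A pl_le (Some {(2,3)}) None (Some {(2,3)})"
    unfolding is_meet_def using x by simp
  have a: "is_meet ?A pl_le (Some {(2,3)}) (Some {(1,2)}) (Some {})"
    unfolding is_meet_def using e by (auto simp: le_cases)
  have b: "is_meet ?A pl_le (Some {(2,3)}) (Some {(0,1),(0,2)}) (Some {})"
    unfolding is_meet_def using e by (auto simp: le_cases)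
  have s: "is_join ?A pl_le (Some {}) (Some {}) (Some {})"
    unfolding is_join_def using e by auto
  from D x y z j m a b s have "Some {(2::nat,3::nat)} = Some {}"
    unfolding distributive_lattice_on_def by blast
  then show False by simp
qed
end
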